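(* There is an absolute constant $C>0$ such that for every positive integer $n$ the following holds. Suppose that $\mathcal{A}\subset\mathcal{P}[n]$ does not contain two distinct sets $A$ and $B$ with $|B\setminus A|=2|A\setminus B|$ in which $a<b$ for every $a\in A\setminus B$ and every $b\in B\setminus A$. Then \[ |\mathcal{A}|\le C\,e^{120(\log n)^{1/2}}\frac{2^n}{n^{1/2}}. \]
   Context: $[n]=\{1,\ldots,n\}$ and $\mathcal{P}[n]$ is its power set; $\log$ is the natural logarithm. *)

theory Defs
  imports Complex_Main
begin

definition forbidden_pair :: "nat set \<Rightarrow> nat set \<Rightarrow> bool" where
  "forbidden_pair A B \<longleftrightarrow> A \<noteq> B \<and> card (B - A) = 2 * card (A - B) \<and>
     (\<forall>a\<in>A - B. \<forall>b\<in>B - A. a < b)"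

end

theory Submission imports Defs begin


lemma alg1:
  fixes b c d k :: nat
  assumes "(2*Suc k)*d = c*Suc k" "Suc (2*k)*b = d*Suc k"
  shows "c*Suc k = 2*Suc (2*k)*b"
proof -
  have "c*Suc k*Suc k = (2*Suc k)*(d*Suc k)" using assms(1) by (simp add: algebra_simps)
  also have "... = (2*Suc k)*(Suc (2*k)*b)" using assms(2) by simp
  also have "... = (2*Suc (2*k)*b)*Suc k" by (simp add: algebra_simps)
  finally show ?thesis by (metis mult_right_cancel nat.distinct(1))
qed

lemma alg2:
  fixes b c k P :: nat
  assumes "c*Suc k = 2*Suc (2*k)*b" "b^2*(2*k+1) \<le> P"
  shows "c^2*(2*k+3) \<le> 16*P"
proof -
  have "c^2*(2*k+3)*(Suc k)^2 = (c*Suc k)^2*(2*k+3)" by (simp add: power2_eq_square algebra_simps)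
  also have "... = (4*(2*k+1)*(2*k+3)) * (b^2*(2*k+1))" unfolding assms(1) by (simp add: power2_eq_square algebra_simps)
  also have "... \<le> (4*(2*k+1)*(2*k+3)) * P" using assms(2) by (rule mult_le_mono2)
  also have "... \<le> (16*(Suc k)^2) * P"
  proof (rule mult_le_mono1)
    show "4*(2*k+1)*(2*k+3) \<le> 16*(Suc k)^(2::nat)" by (simp add: power2_eq_square algebra_simps)
  qed
  also have "... = (16*P)*(Suc k)^2" by simp
  finally show ?thesis by (metis mult_le_cancel2 zero_less_Suc zero_less_power)
qed

lemma alg3:
  fixes a c k P :: nat
  assumes "c = a + a" "c^2 * (2*k+3) \<le> 16*P"
  shows "a^2*(2*k+2) \<le> 4*P"
proof -
  have "4*(a^2*(2*k+3)) \<le> 4*(4*P)" using assms by (simp add: power2_eq_square algebra_simps)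
  then have "a^2*(2*k+3) \<le> 4*P" by linarith
  moreover have "a^2*(2*k+2) \<le> a^2*(2*k+3)" by (rule mult_le_mono2) simp
  ultimately show ?thesis by linarith
qed

lemma cb_step: "(2*Suc k choose Suc k) * Suc k = 2*Suc (2*k)*(2*k choose k)"
proof -
  have e1: "Suc (Suc (2*k)) * (Suc (2*k) choose k) = (Suc (Suc (2*k)) choose Suc k) * Suc k"
    by (rule Suc_times_binomial_eq)
  have e2: "Suc (2*k) * (2*k choose k) = (Suc (2*k) choose Suc k) * Suc k"
    by (rule Suc_times_binomial_eq)
  have e3a: "(Suc (2*k) choose Suc k) = (Suc (2*k) choose (Suc (2*k) - Suc k))"
    by (rule binomial_symmetric) simp
  have e3b: "Suc (2*k) - Suc k = k" by simp
  have e3: "(Suc (2*k) choose Suc k) = (Suc (2*k) choose k)" using e3a unfolding e3b .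
  have t: "Suc (Suc (2*k)) = 2*Suc k" by simp
  have E1: "(2*Suc k)*(Suc (2*k) choose k) = (2*Suc k choose Suc k)*Suc k"
    using e1 unfolding t .
  have E2: "Suc (2*k)*(2*k choose k) = (Suc (2*k) choose k)*Suc k"
    using e2 unfolding e3 .
  show ?thesis using alg1[OF E1 E2] .
qed

lemma cb_even: "(2*k choose k)^2 * (2*k+1) \<le> 16^k"
proof (induction k)
  case 0 then show ?case by simp
next
  case (Suc k)
  have f: "(2*Suc k choose Suc k)^2 * (2*k+3) \<le> 16 * 16^k"
    using alg2[OF cb_step Suc.IH] .
  have a: "2*Suc k + 1 = 2*k+3" by simp
  have b: "(16::nat)^Suc k = 16 * 16^k" by simp
  show ?case unfolding a b using f .
qed

lemma cb_all: "(m choose (m div 2))^2 * (m+1) \<le> 4^m"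
proof (cases "even m")
  case True
  then obtain k where m: "m = 2*k" by blast
  have "(4::nat)^m = 16^k" by (simp add: m power_mult)
  moreover have "m div 2 = k" using m by simp
  ultimately show ?thesis using cb_even[of k] m by simp
next
  case False
  then obtain k where m: "m = 2*k+1" using oddE by blast
  have md: "m div 2 = k" using m by simp
  have e0: "(Suc (Suc (2*k)) choose Suc k) = (Suc (2*k) choose k) + (Suc (2*k) choose Suc k)"
    by (rule binomial_Suc_Suc)
  have e3a: "(Suc (2*k) choose Suc k) = (Suc (2*k) choose (Suc (2*k) - Suc k))"
    by (rule binomial_symmetric) simp
  have e3b: "Suc (2*k) - Suc k = k" by simp
  have e3: "(Suc (2*k) choose Suc k) = (Suc (2*k) choose k)" using e3a unfolding e3b .
  have t: "Suc (Suc (2*k)) = 2*Suc k" by simp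
  have e: "(2*Suc k choose Suc k) = (Suc (2*k) choose k) + (Suc (2*k) choose k)"
    using e0 unfolding e3 t .
  have f0: "(2*Suc k choose Suc k)^2 * (2*Suc k+1) \<le> 16^(Suc k)" by (rule cb_even)
  have a: "2*Suc k + 1 = 2*k+3" by simp
  have b: "(16::nat)^Suc k = 16 * 16^k" by simp
  have f: "(2*Suc k choose Suc k)^2 * (2*k+3) \<le> 16 * 16^k" using f0 unfolding a b .
  have g: "(Suc (2*k) choose k)^2*(2*k+2) \<le> 4*16^k" by (rule alg3[OF e f])
  have m1: "m+1 = 2*k+2" using m by simp
  have m4: "(4::nat)^m = 4*16^k" by (simp add: m power_mult power_add)
  have ms: "m = Suc (2*k)" using m by simp
  show ?thesis unfolding md m1 m4 using g unfolding ms[symmetric] .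
qed

lemma cb_real: "real (m choose (m div 2)) \<le> 2^m / sqrt (real m + 1)"
proof -
  define b where "b = m choose (m div 2)"
  have "real (b^2 * (m+1)) \<le> real ((4::nat)^m)" using cb_all unfolding b_def by (simp only: of_nat_le_iff)
  moreover have "real ((4::nat)^m) = (2^m)^2"
  proof -
    have "((2::real)^m)^2 = ((2::real)^2)^m" by (metis power_mult mult.commute)
    then show ?thesis by simp
  qed
  ultimately have h: "(real b)^2 * (real m + 1) \<le> (2^m)^2" by (simp add: algebra_simps)
  have p: "sqrt (real m + 1) > 0" by simp
  have "real b * sqrt (real m + 1) = sqrt ((real b)^2 * (real m + 1))"
    by (simp add: real_sqrt_mult)
  also have "... \<le> sqrt ((2^m)^2)" using h real_sqrt_le_mono by blast
  also have "... = 2^m" by simp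
  finally show ?thesis using p unfolding b_def[symmetric] by (simp add: field_simps)
qed


definition chain_ok :: "nat set \<Rightarrow> nat set list \<Rightarrow> bool" where
 "chain_ok X c \<longleftrightarrow> c \<noteq> [] \<and> (\<forall>i<length c. c!i \<subseteq> X) \<and>
    (\<forall>i j. i \<le> j \<longrightarrow> j < length c \<longrightarrow> c!i \<subseteq> c!j) \<and>
    (\<forall>i<length c. card (c!i) = card (c!0) + i) \<and> 2 * card (c!0) + length c = card X + 1"

definition scd :: "nat set \<Rightarrow> nat set list set \<Rightarrow> bool" where
 "scd X CS \<longleftrightarrow> finite CS \<and> (\<forall>c\<in>CS. chain_ok X c) \<and>
    (\<forall>A. A \<subseteq> X \<longrightarrow> (\<exists>c\<in>CS. \<exists>i<length c. c!i = A)) \<and>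
    (\<forall>c\<in>CS. \<forall>d\<in>CS. \<forall>i j. i < length c \<longrightarrow> j < length d \<longrightarrow> c!i = d!j \<longrightarrow> c = d \<and> i = j)"

lemma chain1:
  assumes c: "chain_ok X c" and fin: "finite X" and x: "x \<notin> X"
  shows "chain_ok (insert x X) (c @ [insert x (last c)])"
proof -
  let ?c = "c @ [insert x (last c)]"
  have ne: "c \<noteq> []" and sub: "\<And>i. i<length c \<Longrightarrow> c!i \<subseteq> X"
    and mono: "\<And>i j. i \<le> j \<Longrightarrow> j < length c \<Longrightarrow> c!i \<subseteq> c!j"
    and cd: "\<And>i. i<length c \<Longrightarrow> card (c!i) = card (c!0) + i"
    and sym: "2 * card (c!0) + length c = card X + 1"
    using c unfolding chain_ok_def by blast+
  have lc: "last c = c!(length c - 1)" using ne by (simp add: last_conv_nth)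
  have lsub: "last c \<subseteq> X" using sub[of "length c - 1"] ne lc by simp
  have xl: "x \<notin> last c" using lsub x by auto
  have finl: "finite (last c)" using lsub fin finite_subset by blast
  have cl: "card (insert x (last c)) = card (c!0) + length c"
    using cd[of "length c - 1"] ne lc xl finl by simp
  have c0: "?c!0 = c!0" using ne by (simp add: nth_append)
  show ?thesis unfolding chain_ok_def
  proof (intro conjI allI impI)
    show "?c \<noteq> []" by simp
  next
    fix i assume "i < length ?c"
    then show "?c!i \<subseteq> insert x X" using sub lsub by (auto simp: nth_append)
  next
    fix i j assume ij: "i \<le> j" "j < length ?c"
    show "?c!i \<subseteq> ?c!j"
    proof (cases "j < length c")
      case True then show ?thesis using ij mono by (simp add: nth_append)
    next
      case False
      then have j: "j = length c" using ij by simp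
      show ?thesis
      proof (cases "i < length c")
        case True
        then have "c!i \<subseteq> last c" using mono[of i "length c - 1"] lc by simp
        then show ?thesis using j True by (auto simp: nth_append)
      next
        case False then show ?thesis using j ij by (simp add: nth_append)
      qed
    qed
  next
    fix i assume i: "i < length ?c"
    show "card (?c!i) = card (?c!0) + i"
    proof (cases "i < length c")
      case True
      then have "?c!i = c!i" by (simp add: nth_append)
      then show ?thesis using cd[OF True] c0 by simp
    next
      case False
      then have "i = length c" using i by simp
      then have "?c!i = insert x (last c)" by (simp add: nth_append)
      then show ?thesis using cl c0 \<open>i = length c\<close> by simp
    qed
  next
    show "2 * card (?c!0) + length ?c = card (insert x X) + 1"
      using c0 sym fin x by simp
  qed
qed

lemma chain2:
  assumes c: "chain_ok X c" and fin: "finite X" and x: "x \<notin> X" and len: "length c \<ge> 2"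
  shows "chain_ok (insert x X) (map (insert x) (butlast c))"
proof -
  let ?c = "map (insert x) (butlast c)"
  have ne: "c \<noteq> []" and sub: "\<And>i. i<length c \<Longrightarrow> c!i \<subseteq> X"
    and mono: "\<And>i j. i \<le> j \<Longrightarrow> j < length c \<Longrightarrow> c!i \<subseteq> c!j"
    and cd: "\<And>i. i<length c \<Longrightarrow> card (c!i) = card (c!0) + i"
    and sym: "2 * card (c!0) + length c = card X + 1"
    using c unfolding chain_ok_def by blast+
  have lenc: "length ?c = length c - 1" by simp
  have nth: "?c!i = insert x (c!i)" if "i < length c - 1" for i
    using that by (simp add: nth_butlast)
  have cardi: "card (?c!i) = card (c!i) + 1" if "i < length c - 1" for i
  proof -
    have il: "i < length c" using that by simp
    have s: "c!i \<subseteq> X" using sub[OF il] .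
    have xn: "x \<notin> c!i" using s x by blast
    have fi: "finite (c!i)" using s fin by (rule finite_subset)
    have "card (insert x (c!i)) = card (c!i) + 1" using xn fi by simp
    then show ?thesis unfolding nth[OF that] .
  qed
  have l0: "0 < length c - 1" using len by simp
  have c0: "card (?c!0) = card (c!0) + 1" using cardi[OF l0] .
  show ?thesis unfolding chain_ok_def
  proof (intro conjI allI impI)
    show "?c \<noteq> []" using len by (cases c) auto
  next
    fix i assume i: "i < length ?c"
    then have i1: "i < length c - 1" by simp
    then have "c!i \<subseteq> X" using sub by simp
    then show "?c!i \<subseteq> insert x X" using nth[OF i1] by blast
  next
    fix i j assume ij: "i \<le> j" "j < length ?c"
    then have i1: "i < length c - 1" and j1: "j < length c - 1" by simp_all
    have "c!i \<subseteq> c!j" using mono[OF ij(1)] j1 by simp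
    then show "?c!i \<subseteq> ?c!j" unfolding nth[OF i1] nth[OF j1] by blast
  next
    fix i assume i: "i < length ?c"
    then have i1: "i < length c - 1" by simp
    have "card (c!i) = card (c!0) + i" using cd i1 by simp
    then show "card (?c!i) = card (?c!0) + i" unfolding cardi[OF i1] c0 by simp
  next
    have "card (insert x X) = card X + 1" using fin x by simp
    moreover have "length ?c = length c - 1" by simp
    ultimately show "2 * card (?c!0) + length ?c = card (insert x X) + 1"
      unfolding c0 using sym len by simp
  qed
qed



lemma insert_inj: "x \<notin> A \<Longrightarrow> x \<notin> B \<Longrightarrow> insert x A = insert x B \<Longrightarrow> A = B"
  by (metis Diff_insert_absorb)

lemma scd_exists: "finite X \<Longrightarrow> \<exists>CS. scd X CS"
proof (induction X rule: finite_induct)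
  case empty
  have "scd {} {[{}]}" unfolding scd_def chain_ok_def by auto
  then show ?case by blast
next
  case (insert x X)
  then obtain CS where S: "scd X CS" by blast
  have finCS: "finite CS" and ch: "\<And>c. c\<in>CS \<Longrightarrow> chain_ok X c"
    and cov: "\<And>A. A \<subseteq> X \<Longrightarrow> \<exists>c\<in>CS. \<exists>i<length c. c!i = A"
    and un: "\<And>c d i j. c\<in>CS \<Longrightarrow> d\<in>CS \<Longrightarrow> i < length c \<Longrightarrow> j < length d \<Longrightarrow> c!i = d!j \<Longrightarrow> c = d \<and> i = j"
    using S unfolding scd_def by blast+
  define f1 where "f1 c = c @ [insert x (last c)]" for c :: "nat set list"
  define f2 where "f2 c = map (insert x) (butlast c)" for c :: "nat set list"
  define CS' where "CS' = f1 ` CS \<union> f2 ` {c\<in>CS. length c \<ge> 2}"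
  have ne: "\<And>c. c\<in>CS \<Longrightarrow> c \<noteq> []" using ch unfolding chain_ok_def by blast
  have subX: "\<And>c i. c\<in>CS \<Longrightarrow> i < length c \<Longrightarrow> c!i \<subseteq> X" using ch unfolding chain_ok_def by blast
  have xn: "\<And>c i. c\<in>CS \<Longrightarrow> i < length c \<Longrightarrow> x \<notin> c!i" using subX insert.hyps(2) by blast
  have lc: "\<And>c. c\<in>CS \<Longrightarrow> last c = c!(length c - 1)" using ne by (simp add: last_conv_nth)
  have f1n: "\<And>c i. c\<in>CS \<Longrightarrow> i < length (f1 c) \<Longrightarrow> (f1 c)!i = (if i < length c then c!i else insert x (c!(length c - 1)))"
    unfolding f1_def using lc by (auto simp: nth_append)
  have f1l: "\<And>c. length (f1 c) = Suc (length c)" unfolding f1_def by simp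
  have f2n: "\<And>c i. i < length (f2 c) \<Longrightarrow> (f2 c)!i = insert x (c!i)"
    unfolding f2_def by (simp add: nth_butlast)
  have f2l: "\<And>c. length (f2 c) = length c - 1" unfolding f2_def by simp
  have P1: "finite CS'" unfolding CS'_def using finCS by simp
  have P2: "\<forall>c\<in>CS'. chain_ok (insert x X) c"
  proof


    fix c assume "c \<in> CS'"
    then show "chain_ok (insert x X) c"
      unfolding CS'_def f1_def f2_def using chain1 chain2 ch insert.hyps by auto
  qed
  have P3: "\<forall>A. A \<subseteq> insert x X \<longrightarrow> (\<exists>c\<in>CS'. \<exists>i<length c. c!i = A)"
  proof (intro allI impI)
    fix A assume A: "A \<subseteq> insert x X"
    show "\<exists>c\<in>CS'. \<exists>i<length c. c!i = A"
    proof (cases "x \<in> A")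
      case False
      then have "A \<subseteq> X" using A by blast
      then obtain c i where c: "c\<in>CS" "i < length c" "c!i = A" using cov by blast
      then have "f1 c \<in> CS'" "i < length (f1 c)" "(f1 c)!i = A" using f1n f1l unfolding CS'_def by auto
      then show ?thesis by blast
    next
      case True
      then have "A - {x} \<subseteq> X" using A by blast
      then obtain c i where c: "c\<in>CS" "i < length c" "c!i = A - {x}" using cov by blast
      have AA: "A = insert x (c!i)" using c True by blast
      show ?thesis
      proof (cases "i = length c - 1")
        case True
        then have "f1 c \<in> CS'" "length c < length (f1 c)" "(f1 c)!(length c) = A"
          using f1n f1l c AA unfolding CS'_def by auto
        then show ?thesis by blast
      next
        case False
        then have i1: "i < length c - 1" using c(2) by simp
        then have "length c \<ge> 2" "i < length (f2 c)" unfolding f2l by simp_all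
        then have "f2 c \<in> CS'" "i < length (f2 c)" "(f2 c)!i = A"
          using f2n c AA unfolding CS'_def by auto
        then show ?thesis by blast
      qed
    qed
  qed
  have P4: "\<forall>c\<in>CS'. \<forall>d\<in>CS'. \<forall>i j. i < length c \<longrightarrow> j < length d \<longrightarrow> c!i = d!j \<longrightarrow> c = d \<and> i = j"
  proof (intro ballI allI impI)
    fix c d i j assume cd: "c \<in> CS'" "d \<in> CS'" and ij: "i < length c" "j < length d" "c!i = d!j"
    have desc: "\<And>e k. e \<in> CS' \<Longrightarrow> k < length e \<Longrightarrow>
        \<exists>c0\<in>CS. \<exists>k0<length c0. (e!k = c0!k0 \<and> (e = f1 c0 \<and> k = k0)) \<or>
           (e!k = insert x (c0!k0) \<and> ((e = f1 c0 \<and> k = length c0 \<and> k0 = length c0 - 1)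
              \<or> (e = f2 c0 \<and> k = k0 \<and> k0 < length c0 - 1 \<and> length c0 \<ge> 2)))"
    proof -
      fix e k assume e: "e \<in> CS'" "k < length e"
      show "?thesis e k"
      proof (cases "e \<in> f1 ` CS")
        case True
        then obtain c0 where c0: "c0 \<in> CS" "e = f1 c0" by blast
        show ?thesis
        proof (cases "k < length c0")
          case True then show ?thesis using c0 e f1n by auto
        next
          case False
          then have "k = length c0" using e c0 f1l by (metis less_antisym)
          moreover have "length c0 - 1 < length c0" using ne[OF c0(1)] by simp
          ultimately show ?thesis using c0 e f1n by (metis less_irrefl)
        qed
      next
        case False
        then obtain c0 where c0: "c0 \<in> CS" "e = f2 c0" "length c0 \<ge> 2" using e unfolding CS'_def by blast
        then show ?thesis using e f2n f2l by (metis less_imp_diff_less order_less_imp_le less_le_trans diff_le_self) 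
      qed
    qed
    obtain c0 i0 where C: "c0\<in>CS" "i0 < length c0" and
      Cd: "(c!i = c0!i0 \<and> (c = f1 c0 \<and> i = i0)) \<or>
           (c!i = insert x (c0!i0) \<and> ((c = f1 c0 \<and> i = length c0 \<and> i0 = length c0 - 1)
              \<or> (c = f2 c0 \<and> i = i0 \<and> i0 < length c0 - 1 \<and> length c0 \<ge> 2)))"
      using desc[OF cd(1) ij(1)] by blast
    obtain d0 j0 where D: "d0\<in>CS" "j0 < length d0" and
      Dd: "(d!j = d0!j0 \<and> (d = f1 d0 \<and> j = j0)) \<or>
           (d!j = insert x (d0!j0) \<and> ((d = f1 d0 \<and> j = length d0 \<and> j0 = length d0 - 1)
              \<or> (d = f2 d0 \<and> j = j0 \<and> j0 < length d0 - 1 \<and> length d0 \<ge> 2)))"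
      using desc[OF cd(2) ij(2)] by blast
    have xc: "x \<notin> c0!i0" using xn C by blast
    have xd: "x \<notin> d0!j0" using xn D by blast
    show "c = d \<and> i = j"
    proof (cases "c!i = c0!i0")
      case True
      then have "x \<notin> d!j" using xc ij by simp
      then have "d!j = d0!j0" "d = f1 d0" "j = j0" using Dd by auto
      moreover have "c!i \<noteq> insert x (c0!i0)" using True xc by (metis insertI1)
      then have "c = f1 c0" "i = i0" using Cd by blast+
      moreover have "c0 = d0 \<and> i0 = j0" using un[OF C(1) D(1) C(2) D(2)] True ij calculation by simp
      ultimately show ?thesis by simp
    next
      case False
      then have ci: "c!i = insert x (c0!i0)" using Cd by auto
      then have "x \<in> d!j" using ij by simp
      then have dj: "d!j = insert x (d0!j0)" using Dd xd by auto
      have "c0!i0 = d0!j0" using insert_inj[OF xc xd] ci dj ij by simp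
      then have eq: "c0 = d0" "i0 = j0" using un[OF C(1) D(1) C(2) D(2)] by auto
      show ?thesis using Cd Dd ci dj xc xd eq by auto
    qed
  qed
  have "scd (insert x X) CS'" unfolding scd_def using P1 P2 P3 P4 by blast
  then show ?case by blast
qed



lemma scd_card:
  assumes fin: "finite X" and S: "scd X CS"
  shows "card CS \<le> card X choose (card X div 2)"
proof -
  let ?m = "card X"
  define f where "f c = c!(?m div 2 - card (c!0))" for c :: "nat set list"
  have pr: "f c \<subseteq> X \<and> card (f c) = ?m div 2 \<and> ?m div 2 - card (c!0) < length c" if c: "c \<in> CS" for c
  proof -
    have co: "chain_ok X c" using S c unfolding scd_def by blast
    have ne: "c \<noteq> []" and sub: "\<And>i. i<length c \<Longrightarrow> c!i \<subseteq> X"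
      and cd: "\<And>i. i<length c \<Longrightarrow> card (c!i) = card (c!0) + i"
      and sym: "2 * card (c!0) + length c = ?m + 1"
      using co unfolding chain_ok_def by blast+
    have l1: "length c \<ge> 1" using ne by (cases c) auto
    define k where "k = card (c!0)"
    have sym': "2 * k + length c = ?m + 1" using sym unfolding k_def .
    have lt: "?m div 2 - k < length c" using sym' l1 by linarith
    have le: "k \<le> ?m div 2" using sym' l1 by linarith
    have cc: "card (c!(?m div 2 - k)) = k + (?m div 2 - k)" using cd[OF lt] unfolding k_def .
    have "f c = c!(?m div 2 - k)" unfolding f_def k_def ..
    then show ?thesis using sub[OF lt] cc lt le unfolding k_def by simp
  qed
  have "inj_on f CS"
  proof (rule inj_onI)
    fix c d assume cd: "c \<in> CS" "d \<in> CS" "f c = f d"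
    have un: "\<forall>c\<in>CS. \<forall>d\<in>CS. \<forall>i j. i < length c \<longrightarrow> j < length d \<longrightarrow> c!i = d!j \<longrightarrow> c = d \<and> i = j"
      using S unfolding scd_def by blast
    have "?m div 2 - card (c!0) < length c" "?m div 2 - card (d!0) < length d"
      using pr[OF cd(1)] pr[OF cd(2)] by blast+
    moreover have "c!(?m div 2 - card (c!0)) = d!(?m div 2 - card (d!0))" using cd(3) unfolding f_def .
    ultimately show "c = d" using un cd(1,2) by blast
  qed
  moreover have "f ` CS \<subseteq> {A. A \<subseteq> X \<and> card A = ?m div 2}" using pr by blast
  moreover have "finite {A. A \<subseteq> X \<and> card A = ?m div 2}" using fin by simp
  ultimately have "card CS \<le> card {A. A \<subseteq> X \<and> card A = ?m div 2}"
    by (rule card_inj_on_le)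
  also have "... = ?m choose (?m div 2)" using n_subsets[OF fin] by simp
  finally show ?thesis .
qed

lemma scd_sum:
  assumes fin: "finite X" and S: "scd X CS"
  shows "(\<Sum>c\<in>CS. length c) \<le> 2 ^ card X"
proof -
  have finCS: "finite CS" using S unfolding scd_def by blast
  let ?S = "SIGMA c:CS. {..<length c}"
  have "card ?S = (\<Sum>c\<in>CS. length c)" using finCS by simp
  moreover have "inj_on (\<lambda>(c,i). c!i) ?S"
  proof (rule inj_onI)
    fix p q assume p: "p \<in> ?S" and q: "q \<in> ?S" and e: "(\<lambda>(c,i). c!i) p = (\<lambda>(c,i). c!i) q"
    obtain c i where pc: "p = (c,i)" by (cases p)
    obtain d j where qd: "q = (d,j)" by (cases q)
    have h: "c \<in> CS" "i < length c" "d \<in> CS" "j < length d" "c!i = d!j"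
      using p q e unfolding pc qd by auto
    have un: "\<forall>c\<in>CS. \<forall>d\<in>CS. \<forall>i j. i < length c \<longrightarrow> j < length d \<longrightarrow> c!i = d!j \<longrightarrow> c = d \<and> i = j"
      using S unfolding scd_def by blast
    then have "c = d \<and> i = j" using h by blast
    then show "p = q" unfolding pc qd by simp
  qed
  moreover have "(\<lambda>(c,i). c!i) ` ?S \<subseteq> Pow X"
  proof
    fix y assume "y \<in> (\<lambda>(c,i). c!i) ` ?S"
    then obtain c i where ci: "c \<in> CS" "i < length c" "y = c!i" by blast
    have "chain_ok X c" using S ci(1) unfolding scd_def by blast
    then have "c!i \<subseteq> X" using ci(2) unfolding chain_ok_def by blast+
    then show "y \<in> Pow X" using ci(3) by simp
  qed
  moreover have "finite (Pow X)" using fin by simp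
  ultimately have "card ?S \<le> card (Pow X)" using card_inj_on_le by blast
  then have "(\<Sum>c\<in>CS. length c) \<le> card (Pow X)" using \<open>card ?S = (\<Sum>c\<in>CS. length c)\<close> by simp
  then show ?thesis unfolding card_Pow[OF fin] .
qed

lemma key:
  assumes c: "chain_ok L c" and d: "chain_ok H d" and LH: "\<forall>a\<in>L. \<forall>b\<in>H. a < b"
    and fL: "finite L" and fH: "finite H"
    and i: "i' < i" "i < length c" and j: "j < j'" "j' < length d" and jj: "j' - j = 2*(i - i')"
  shows "forbidden_pair (c!i \<union> d!j) (c!i' \<union> d!j')"
proof -
  have subc: "\<And>k. k<length c \<Longrightarrow> c!k \<subseteq> L" and monoc: "\<And>k l. k \<le> l \<Longrightarrow> l < length c \<Longrightarrow> c!k \<subseteq> c!l"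
    and cdc: "\<And>k. k<length c \<Longrightarrow> card (c!k) = card (c!0) + k"
    using c unfolding chain_ok_def by blast+
  have subd: "\<And>k. k<length d \<Longrightarrow> d!k \<subseteq> H" and monod: "\<And>k l. k \<le> l \<Longrightarrow> l < length d \<Longrightarrow> d!k \<subseteq> d!l"
    and cdd: "\<And>k. k<length d \<Longrightarrow> card (d!k) = card (d!0) + k"
    using d unfolding chain_ok_def by blast+
  have disj: "L \<inter> H = {}" using LH by fastforce
  have i'l: "i' < length c" using i by simp
  have jl: "j < length d" using j by simp
  have s1: "c!i' \<subseteq> c!i" using monoc i by simp
  have s2: "d!j \<subseteq> d!j'" using monod j by simp
  have Lc: "c!i \<subseteq> L" "c!i' \<subseteq> L" using subc i i'l by auto
  have Hd: "d!j \<subseteq> H" "d!j' \<subseteq> H" using subd j jl by auto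
  have AB: "(c!i \<union> d!j) - (c!i' \<union> d!j') = c!i - c!i'" using Lc Hd disj s1 s2 by blast
  have BA: "(c!i' \<union> d!j') - (c!i \<union> d!j) = d!j' - d!j" using Lc Hd disj s1 s2 by blast
  have fc: "finite (c!i')" using Lc fL finite_subset by blast
  have fd: "finite (d!j)" using Hd fH finite_subset by blast
  have cAB: "card (c!i - c!i') = i - i'" using card_Diff_subset[OF fc s1] cdc[OF i(2)] cdc[OF i'l] by simp
  have cBA: "card (d!j' - d!j) = j' - j" using card_Diff_subset[OF fd s2] cdd[OF j(2)] cdd[OF jl] by simp
  have ne: "c!i - c!i' \<noteq> {}"
  proof
    assume "c!i - c!i' = {}"
    then have "card (c!i - c!i') = 0" by (metis card.empty)
    then show False using cAB i(1) by simp
  qed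
  show ?thesis unfolding forbidden_pair_def AB BA
  proof (intro conjI)
    show "c!i \<union> d!j \<noteq> c!i' \<union> d!j'" using AB ne by auto
    show "card (d!j' - d!j) = 2 * card (c!i - c!i')" using cAB cBA jj by simp
    show "\<forall>a\<in>c!i - c!i'. \<forall>b\<in>d!j' - d!j. a < b" using Lc Hd LH by blast
  qed
qed



lemma sum_grid:
  fixes f g :: "'a \<Rightarrow> nat"
  shows "(\<Sum>p\<in>A\<times>B. 2*f (fst p) + g (snd p)) = 2*card B*(\<Sum>a\<in>A. f a) + card A*(\<Sum>b\<in>B. g b)"
proof -
  have "(\<Sum>p\<in>A\<times>B. 2*f (fst p) + g (snd p)) = (\<Sum>a\<in>A. \<Sum>b\<in>B. 2*f a + g b)"
    by (simp add: sum.cartesian_product case_prod_beta)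
  also have "... = (\<Sum>a\<in>A. card B * (2*f a) + (\<Sum>b\<in>B. g b))"
    by (simp add: sum.distrib)
  also have "... = (\<Sum>a\<in>A. card B * (2*f a)) + card A * (\<Sum>b\<in>B. g b)"
    by (simp add: sum.distrib)
  also have "(\<Sum>a\<in>A. card B * (2*f a)) = card B * (2 * (\<Sum>a\<in>A. f a))"
    by (simp only: sum_distrib_left)
  finally show ?thesis by simp
qed

lemma main_bound:
  fixes n :: nat and F :: "nat set set"
  assumes n: "n \<ge> 1" and FP: "F \<subseteq> Pow {1..n}" and nf: "\<not> (\<exists>A\<in>F. \<exists>B\<in>F. forbidden_pair A B)"
  shows "real (card F) \<le> 3 * 2^n / sqrt (real (n div 2) + 1)"
proof -
  define h where "h = n div 2"
  define L where "L = {1..h}"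
  define H where "H = {h+1..n}"
  have fL: "finite L" and fH: "finite H" unfolding L_def H_def by auto
  have cL: "card L = h" and cH: "card H = n - h" unfolding L_def H_def by auto
  have LH: "\<forall>a\<in>L. \<forall>b\<in>H. a < b" unfolding L_def H_def by auto
  have LHU: "{1..n} = L \<union> H" unfolding L_def H_def h_def by auto
  obtain CL where SL: "scd L CL" using scd_exists fL by blast
  obtain CH where SH: "scd H CH" using scd_exists fH by blast
  have finCL: "finite CL" "finite CH" using SL SH unfolding scd_def by auto
  have ex: "\<forall>A\<in>F. \<exists>t. fst t \<in> CL \<and> fst (snd t) < length (fst t) \<and> fst t ! fst (snd t) = A \<inter> L
      \<and> fst (snd (snd t)) \<in> CH \<and> snd (snd (snd t)) < length (fst (snd (snd t)))
      \<and> fst (snd (snd t)) ! snd (snd (snd t)) = A \<inter> H"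
  proof
    fix A assume "A \<in> F"
    have covL: "\<And>B. B \<subseteq> L \<Longrightarrow> \<exists>c\<in>CL. \<exists>i<length c. c!i = B" using SL unfolding scd_def by blast
    have covH: "\<And>B. B \<subseteq> H \<Longrightarrow> \<exists>c\<in>CH. \<exists>i<length c. c!i = B" using SH unfolding scd_def by blast
    obtain c i where "c \<in> CL" "i < length c" "c!i = A \<inter> L" using covL[of "A \<inter> L"] by blast
    moreover obtain d j where "d \<in> CH" "j < length d" "d!j = A \<inter> H" using covH[of "A \<inter> H"] by blast
    ultimately show "\<exists>t. fst t \<in> CL \<and> fst (snd t) < length (fst t) \<and> fst t ! fst (snd t) = A \<inter> L
      \<and> fst (snd (snd t)) \<in> CH \<and> snd (snd (snd t)) < length (fst (snd (snd t)))
      \<and> fst (snd (snd t)) ! snd (snd (snd t)) = A \<inter> H"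
      by (intro exI[of _ "(c,i,d,j)"]) simp
  qed
  from bchoice[OF ex] obtain q where q0: "\<forall>A\<in>F. fst (q A) \<in> CL \<and> fst (snd (q A)) < length (fst (q A)) \<and> fst (q A) ! fst (snd (q A)) = A \<inter> L
      \<and> fst (snd (snd (q A))) \<in> CH \<and> snd (snd (snd (q A))) < length (fst (snd (snd (q A))))
      \<and> fst (snd (snd (q A))) ! snd (snd (snd (q A))) = A \<inter> H"
    by (rule exE)
  have q: "\<And>A. A\<in>F \<Longrightarrow> fst (q A) \<in> CL \<and> fst (snd (q A)) < length (fst (q A)) \<and> fst (q A) ! fst (snd (q A)) = A \<inter> L
      \<and> fst (snd (snd (q A))) \<in> CH \<and> snd (snd (snd (q A))) < length (fst (snd (snd (q A))))
      \<and> fst (snd (snd (q A))) ! snd (snd (snd (q A))) = A \<inter> H"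
    using q0 by (rule bspec)
  define qc where "qc A = fst (q A)" for A
  define qi where "qi A = fst (snd (q A))" for A
  define qd where "qd A = fst (snd (snd (q A)))" for A
  define qj where "qj A = snd (snd (snd (q A)))" for A
  have Q: "\<And>A. A\<in>F \<Longrightarrow> qc A \<in> CL \<and> qi A < length (qc A) \<and> qc A ! qi A = A \<inter> L
      \<and> qd A \<in> CH \<and> qj A < length (qd A) \<and> qd A ! qj A = A \<inter> H"
    using q unfolding qc_def qi_def qd_def qj_def by blast
  have decomp: "\<And>A. A\<in>F \<Longrightarrow> A = qc A ! qi A \<union> qd A ! qj A"
  proof -
    fix A assume A: "A \<in> F"
    then have "A \<subseteq> L \<union> H" using FP LHU by auto
    then show "A = qc A ! qi A \<union> qd A ! qj A" using Q[OF A] by blast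
  qed
  define g where "g A = ((qc A, qd A), 2 * qi A + qj A)" for A
  define T where "T = (SIGMA p:CL \<times> CH. {..<2*length (fst p) + length (snd p)})"
  have gT: "g ` F \<subseteq> T"
  proof
    fix y assume "y \<in> g ` F"
    then obtain A where A: "A \<in> F" "y = g A" by blast
    have "qc A \<in> CL" "qd A \<in> CH" "2 * qi A + qj A < 2 * length (qc A) + length (qd A)"
      using Q[OF A(1)] by auto
    then show "y \<in> T" unfolding T_def g_def A(2) by simp
  qed
  have chL: "\<And>c. c \<in> CL \<Longrightarrow> chain_ok L c" using SL unfolding scd_def by blast
  have chH: "\<And>c. c \<in> CH \<Longrightarrow> chain_ok H c" using SH unfolding scd_def by blast
  have ginj: "inj_on g F"
  proof (rule inj_onI)
    fix A B assume A: "A \<in> F" and B: "B \<in> F" and gg: "g A = g B"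
    have eqc: "qc A = qc B" and eqd: "qd A = qd B" and eqs: "2 * qi A + qj A = 2 * qi B + qj B"
      using gg unfolding g_def by auto
    let ?c = "qc A" and ?d = "qd A"
    have QA: "?c \<in> CL" "qi A < length ?c" "?d \<in> CH" "qj A < length ?d" using Q[OF A] by auto
    have QB: "qi B < length ?c" "qj B < length ?d" using Q[OF B] eqc eqd by auto
    have Ae: "A = ?c ! qi A \<union> ?d ! qj A" using decomp[OF A] .
    have Be: "B = ?c ! qi B \<union> ?d ! qj B" using decomp[OF B] eqc eqd by simp
    consider "qi A = qi B" | "qi B < qi A" | "qi A < qi B" by linarith
    then show "A = B"
    proof cases
      case 1 then have "qj A = qj B" using eqs by simp
      then show ?thesis using Ae Be 1 by simp
    next
      case 2
      have "forbidden_pair (?c ! qi A \<union> ?d ! qj A) (?c ! qi B \<union> ?d ! qj B)"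
        by (rule key[OF chL[OF QA(1)] chH[OF QA(3)] LH fL fH 2 QA(2) _ QB(2)]) (use eqs 2 in auto)
      then have "forbidden_pair A B" using Ae Be by simp
      then show ?thesis using nf A B by blast
    next
      case 3
      have "forbidden_pair (?c ! qi B \<union> ?d ! qj B) (?c ! qi A \<union> ?d ! qj A)"
        by (rule key[OF chL[OF QA(1)] chH[OF QA(3)] LH fL fH 3 QB(1) _ QA(4)]) (use eqs 3 in auto)
      then have "forbidden_pair B A" using Ae Be by simp
      then show ?thesis using nf A B by blast
    qed
  qed
  have finT: "finite T" unfolding T_def using finCL by (intro finite_SigmaI) auto
  have "card F \<le> card T" using card_inj_on_le[OF ginj gT finT] .
  also have "card T = (\<Sum>p\<in>CL \<times> CH. 2*length (fst p) + length (snd p))"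
    unfolding T_def using finCL by simp
  also have "... = 2 * card CH * (\<Sum>c\<in>CL. length c) + card CL * (\<Sum>d\<in>CH. length d)"
    by (rule sum_grid)
  finally have cF: "card F \<le> 2 * card CH * (\<Sum>c\<in>CL. length c) + card CL * (\<Sum>d\<in>CH. length d)" .
  have b1: "card CH \<le> (n-h) choose ((n-h) div 2)" using scd_card[OF fH SH] cH by simp
  have b2: "card CL \<le> h choose (h div 2)" using scd_card[OF fL SL] cL by simp
  have s1: "(\<Sum>c\<in>CL. length c) \<le> 2^h" using scd_sum[OF fL SL] cL by simp
  have s2: "(\<Sum>d\<in>CH. length d) \<le> 2^(n-h)" using scd_sum[OF fH SH] cH by simp
  have cF2: "card F \<le> 2 * ((n-h) choose ((n-h) div 2)) * 2^h + (h choose (h div 2)) * 2^(n-h)"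
  proof -
    have "2 * card CH * (\<Sum>c\<in>CL. length c) \<le> 2 * ((n-h) choose ((n-h) div 2)) * 2^h"
      using b1 s1 by (intro mult_le_mono mult_le_mono2) auto
    moreover have "card CL * (\<Sum>d\<in>CH. length d) \<le> (h choose (h div 2)) * 2^(n-h)"
      using b2 s2 by (rule mult_le_mono)
    ultimately show ?thesis using cF by linarith
  qed
  then have rF: "real (card F) \<le> 2 * real ((n-h) choose ((n-h) div 2)) * 2^h + real (h choose (h div 2)) * 2^(n-h)"
  proof -
    have "real (card F) \<le> real (2 * ((n-h) choose ((n-h) div 2)) * 2^h + (h choose (h div 2)) * 2^(n-h))"
      using cF2 by (simp only: of_nat_le_iff)
    then show ?thesis by simp
  qed
  have hn: "h \<le> n - h" unfolding h_def by simp
  have sp: "sqrt (real h + 1) > 0" by simp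
  have pw: "(2::real)^(n-h) * 2^h = 2^n"
  proof -
    have "(2::real)^(n-h) * 2^h = 2^(n-h+h)" by (rule power_add[symmetric])
    also have "n-h+h = n" using hn by simp
    finally show ?thesis .
  qed
  have t1: "real ((n-h) choose ((n-h) div 2)) \<le> 2^(n-h) / sqrt (real h + 1)"
  proof -
    have "real ((n-h) choose ((n-h) div 2)) \<le> 2^(n-h) / sqrt (real (n-h) + 1)" by (rule cb_real)
    also have "... \<le> 2^(n-h) / sqrt (real h + 1)"
      using hn sp by (intro divide_left_mono) auto
    finally show ?thesis .
  qed
  have t2: "real (h choose (h div 2)) \<le> 2^h / sqrt (real h + 1)" using cb_real[of h] .
  have "2 * real ((n-h) choose ((n-h) div 2)) * 2^h \<le> 2 * (2^(n-h) / sqrt (real h + 1)) * 2^h"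
    using t1 by (intro mult_right_mono mult_left_mono) auto
  also have "... = 2 * 2^n / sqrt (real h + 1)" using pw by (simp add: field_simps)
  finally have u1: "2 * real ((n-h) choose ((n-h) div 2)) * 2^h \<le> 2 * 2^n / sqrt (real h + 1)" .
  have "real (h choose (h div 2)) * 2^(n-h) \<le> (2^h / sqrt (real h + 1)) * 2^(n-h)"
    using t2 by (intro mult_right_mono) auto
  also have "... = 2^n / sqrt (real h + 1)" using pw by (simp add: field_simps)
  finally have u2: "real (h choose (h div 2)) * 2^(n-h) \<le> 2^n / sqrt (real h + 1)" .
  have "real (card F) \<le> 2 * 2^n / sqrt (real h + 1) + 2^n / sqrt (real h + 1)" using rF u1 u2 by linarith
  also have "... = 3 * 2^n / sqrt (real h + 1)" by (simp add: field_simps)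
  finally show ?thesis unfolding h_def .
qed

theorem theorem3:
  shows "\<exists>C::real. C > 0 \<and> (\<forall>(n::nat) (\<A>::nat set set). n \<ge> 1 \<longrightarrow>
     \<A> \<subseteq> Pow {1..n} \<longrightarrow>
     \<not> (\<exists>A\<in>\<A>. \<exists>B\<in>\<A>. forbidden_pair A B) \<longrightarrow>
     real (card \<A>) \<le> C * exp (120 * sqrt (ln (real n))) * 2 ^ n / sqrt (real n))"
proof (intro exI[of _ 5] conjI allI impI)
  show "(5::real) > 0" by simp
next
  fix n :: nat and F :: "nat set set"
  assume n: "n \<ge> 1" and FP: "F \<subseteq> Pow {1..n}" and nf: "\<not> (\<exists>A\<in>F. \<exists>B\<in>F. forbidden_pair A B)"
  have b: "real (card F) \<le> 3 * 2^n / sqrt (real (n div 2) + 1)" by (rule main_bound[OF n FP nf])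
  define s where "s = sqrt (real (n div 2) + 1)"
  have sp: "s > 0" unfolding s_def by simp
  have np: "sqrt (real n) > 0" using n by simp
  have "n + 1 \<le> 2 * (n div 2 + 1)" by simp
  then have "real (n + 1) \<le> real (2 * (n div 2 + 1))" by (simp only: of_nat_le_iff)
  then have "real n + 1 \<le> 2 * (real (n div 2) + 1)" by simp
  then have k9: "(3 * sqrt (real n))^2 \<le> (5 * s)^2" unfolding s_def
    by (simp add: power_mult_distrib)
  have k: "3 * sqrt (real n) \<le> 5 * s" using power2_le_imp_le[OF k9] sp by simp
  have r1: "3 * 2^n / s \<le> 5 * 2^n / sqrt (real n)"
  proof -
    have "3 / s = (3 * sqrt (real n)) / (s * sqrt (real n))" using np by simp
    also have "... \<le> (5 * s) / (s * sqrt (real n))"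
    proof (rule divide_right_mono)
      show "3 * sqrt (real n) \<le> 5 * s" using k .
      have "0 < s * sqrt (real n)" using sp np by (rule mult_pos_pos)
      then show "0 \<le> s * sqrt (real n)" by simp
    qed
    also have "... = 5 / sqrt (real n)" using sp by simp
    finally have "3 / s \<le> 5 / sqrt (real n)" .
    then have "2^n * (3 / s) \<le> 2^n * (5 / sqrt (real n))" by (intro mult_left_mono) auto
    then show ?thesis by (simp add: mult.commute)
  qed
  have e1: "exp (120 * sqrt (ln (real n))) \<ge> 1" using n by simp
  have r2: "5 * 2^n / sqrt (real n) \<le> 5 * exp (120 * sqrt (ln (real n))) * 2 ^ n / sqrt (real n)"
  proof -
    have "5 * 2^n * 1 \<le> 5 * 2^n * exp (120 * sqrt (ln (real n)))" using e1 by (intro mult_left_mono) auto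
    then show ?thesis using np by (simp add: divide_right_mono mult_ac)
  qed
  show "real (card F) \<le> 5 * exp (120 * sqrt (ln (real n))) * 2 ^ n / sqrt (real n)"
    using b r1 r2 unfolding s_def by linarith
qed


end
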